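(* If $\theta_0,\theta_1\in V_\Lambda\setminus\mathcal W(\mathcal G)$ lie in different path components of $V_\Lambda\setminus\mathcal W(\mathcal G)$, then $\mathcal P(\theta_0)\ne\mathcal P(\theta_1)$.
   Context: Let $\Lambda$ be a finite dimensional algebra over a field with $n$ isoclasses of simple modules, and $\mathrm{mod}\text-\Lambda$ the category of finitely generated right $\Lambda$-modules. Fix a torsion class $\mathcal G\subseteq\mathrm{mod}\text-\Lambda$ (closed under isomorphisms, extensions and quotients). For $B\in\mathcal G$, a subobject of $B$ is a submodule in $\mathcal G$; a subobject $A\subseteq B$ is strict if $A\cap B'\in\mathcal G$ for every subobject $B'$ of $B$; a strict quotient of $B$ is $B/A$ with $A$ a strict subobject. Let $V_\Lambda=\mathrm{Hom}_{\mathbb Z}(K_0\Lambda,\mathbb R)\cong\mathbb R^n$ (with its Euclidean topology); $\theta(M)$ denotes $\theta$ applied to the dimension vector of $M$. For $M\in\mathcal G$, the pseudo-wall $D_{\mathcal G}(M)$ is the set of $\theta\in V_\Lambda$ with $\theta(M)=0$ and $\theta(M')\le0$ for every strict subobject $M'$ of $M$. $\mathcal W(\theta)$ is the class of $X\in\mathcal G$ with $\theta\in D_{\mathcal G}(X)$, and $\mathcal W(\mathcal G)$ is the set of $\theta$ with $\mathcal W(\theta)\ne\{0\}$, equivalently the union of the $D_{\mathcal G}(M)$ over nonzero $M\in\mathcal G$. $\mathcal P(\theta)$ is the class consisting of $0$ and all nonzero $M\in\mathcal G$ such that $\theta(M'')>0$ for every nonzero strict quotient $M''$ of $M$ (including $M''=M$).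 *)

theory Defs
  imports "Jordan_Normal_Form.Matrix"
begin

text \<open>
  The finite dimensional algebra Lambda over the field 'k is given by a k-basis
  e_0,...,e_(m-1) with structure constants c: e_i e_j = sum_l c i j l e_l,
  and unit 1 = sum_i u i e_i.
  A finitely generated right Lambda-module is a finite dimensional k-vector space
  k^d together with matrices act i (acting on column vectors) describing
  v |-> v . e_i.  Modules are compared up to isomorphism (all classes below are
  closed under isomorphism).
\<close>

type_synonym 'k rmod = "nat \<times> (nat \<Rightarrow> 'k mat)"

definition mdim :: "'k rmod \<Rightarrow> nat" where "mdim M = fst M"
definition act :: "'k rmod \<Rightarrow> nat \<Rightarrow> 'k mat" where "act M = snd M"

definition fd_algebra :: "nat \<Rightarrow> (nat \<Rightarrow> nat \<Rightarrow> nat \<Rightarrow> 'k::field) \<Rightarrow> (nat \<Rightarrow> 'k) \<Rightarrow> bool" where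
  "fd_algebra m c u \<longleftrightarrow>
     (\<forall>i<m. \<forall>j<m. \<forall>k<m. \<forall>p<m.
        (\<Sum>l<m. c i j l * c l k p) = (\<Sum>l<m. c j k l * c i l p)) \<and>
     (\<forall>j<m. \<forall>p<m. (\<Sum>i<m. u i * c i j p) = (if j = p then 1 else 0)
                 \<and> (\<Sum>i<m. u i * c j i p) = (if j = p then 1 else 0))"

definition is_rmod :: "nat \<Rightarrow> (nat \<Rightarrow> nat \<Rightarrow> nat \<Rightarrow> 'k::field) \<Rightarrow> (nat \<Rightarrow> 'k) \<Rightarrow> 'k rmod \<Rightarrow> bool" where
  "is_rmod m c u M \<longleftrightarrow>
     (\<forall>i<m. act M i \<in> carrier_mat (mdim M) (mdim M)) \<and>
     (\<forall>i<m. \<forall>j<m. \<forall>r<mdim M. \<forall>s<mdim M.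
        (act M j * act M i) $$ (r, s) = (\<Sum>l<m. c i j l * act M l $$ (r, s))) \<and>
     (\<forall>r<mdim M. \<forall>s<mdim M. (\<Sum>i<m. u i * act M i $$ (r, s)) = (if r = s then 1 else 0))"

definition mhom :: "nat \<Rightarrow> 'k rmod \<Rightarrow> 'k rmod \<Rightarrow> 'k::field mat \<Rightarrow> bool" where
  "mhom m M N f \<longleftrightarrow> f \<in> carrier_mat (mdim N) (mdim M) \<and> (\<forall>i<m. f * act M i = act N i * f)"

definition mker :: "'k rmod \<Rightarrow> 'k rmod \<Rightarrow> 'k::field mat \<Rightarrow> 'k vec set" where
  "mker M N f = {v \<in> carrier_vec (mdim M). f *\<^sub>v v = 0\<^sub>v (mdim N)}"

definition mimg :: "'k rmod \<Rightarrow> 'k::field mat \<Rightarrow> 'k vec set" where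
  "mimg M f = (\<lambda>v. f *\<^sub>v v) ` carrier_vec (mdim M)"

definition mono_hom :: "nat \<Rightarrow> 'k rmod \<Rightarrow> 'k rmod \<Rightarrow> 'k::field mat \<Rightarrow> bool" where
  "mono_hom m M N f \<longleftrightarrow> mhom m M N f \<and> mker M N f = {0\<^sub>v (mdim M)}"

definition epi_hom :: "nat \<Rightarrow> 'k rmod \<Rightarrow> 'k rmod \<Rightarrow> 'k::field mat \<Rightarrow> bool" where
  "epi_hom m M N f \<longleftrightarrow> mhom m M N f \<and> mimg M f = carrier_vec (mdim N)"

definition iso_hom :: "nat \<Rightarrow> 'k rmod \<Rightarrow> 'k rmod \<Rightarrow> 'k::field mat \<Rightarrow> bool" where
  "iso_hom m M N f \<longleftrightarrow> mono_hom m M N f \<and> epi_hom m M N f"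

definition ses :: "nat \<Rightarrow> (nat \<Rightarrow> nat \<Rightarrow> nat \<Rightarrow> 'k::field) \<Rightarrow> (nat \<Rightarrow> 'k) \<Rightarrow>
    'k rmod \<Rightarrow> 'k rmod \<Rightarrow> 'k rmod \<Rightarrow> 'k mat \<Rightarrow> 'k mat \<Rightarrow> bool" where
  "ses m c u L M N f g \<longleftrightarrow> is_rmod m c u L \<and> is_rmod m c u M \<and> is_rmod m c u N \<and>
     mono_hom m L M f \<and> epi_hom m M N g \<and> mimg L f = mker M N g"

definition submod :: "nat \<Rightarrow> 'k rmod \<Rightarrow> 'k::field vec set \<Rightarrow> bool" where
  "submod m M U \<longleftrightarrow> U \<subseteq> carrier_vec (mdim M) \<and> 0\<^sub>v (mdim M) \<in> U \<and>
     (\<forall>v\<in>U. \<forall>w\<in>U. v + w \<in> U) \<and> (\<forall>a. \<forall>v\<in>U. a \<cdot>\<^sub>v v \<in> U) \<and>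
     (\<forall>i<m. \<forall>v\<in>U. act M i *\<^sub>v v \<in> U)"

definition is_sub_iso :: "nat \<Rightarrow> (nat \<Rightarrow> nat \<Rightarrow> nat \<Rightarrow> 'k::field) \<Rightarrow> (nat \<Rightarrow> 'k) \<Rightarrow>
    'k rmod \<Rightarrow> 'k vec set \<Rightarrow> 'k rmod \<Rightarrow> bool" where
  "is_sub_iso m c u M U N \<longleftrightarrow> is_rmod m c u N \<and> (\<exists>f. mono_hom m N M f \<and> mimg N f = U)"

definition is_quot_iso :: "nat \<Rightarrow> (nat \<Rightarrow> nat \<Rightarrow> nat \<Rightarrow> 'k::field) \<Rightarrow> (nat \<Rightarrow> 'k) \<Rightarrow>
    'k rmod \<Rightarrow> 'k vec set \<Rightarrow> 'k rmod \<Rightarrow> bool" where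
  "is_quot_iso m c u M U N \<longleftrightarrow> is_rmod m c u N \<and> (\<exists>g. epi_hom m M N g \<and> mker M N g = U)"

definition torsion_class :: "nat \<Rightarrow> (nat \<Rightarrow> nat \<Rightarrow> nat \<Rightarrow> 'k::field) \<Rightarrow> (nat \<Rightarrow> 'k) \<Rightarrow>
    'k rmod set \<Rightarrow> bool" where
  "torsion_class m c u G \<longleftrightarrow>
     (\<forall>M\<in>G. is_rmod m c u M) \<and>
     (\<forall>M N f. M \<in> G \<and> is_rmod m c u N \<and> iso_hom m M N f \<longrightarrow> N \<in> G) \<and>
     (\<forall>L M N f g. ses m c u L M N f g \<and> L \<in> G \<and> N \<in> G \<longrightarrow> M \<in> G) \<and>
     (\<forall>M N g. M \<in> G \<and> is_rmod m c u N \<and> epi_hom m M N g \<longrightarrow> N \<in> G)"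

definition sub_in :: "nat \<Rightarrow> (nat \<Rightarrow> nat \<Rightarrow> nat \<Rightarrow> 'k::field) \<Rightarrow> (nat \<Rightarrow> 'k) \<Rightarrow>
    'k rmod set \<Rightarrow> 'k rmod \<Rightarrow> 'k vec set \<Rightarrow> bool" where
  "sub_in m c u G M U \<longleftrightarrow> (\<exists>N\<in>G. is_sub_iso m c u M U N)"

definition subobj :: "nat \<Rightarrow> (nat \<Rightarrow> nat \<Rightarrow> nat \<Rightarrow> 'k::field) \<Rightarrow> (nat \<Rightarrow> 'k) \<Rightarrow>
    'k rmod set \<Rightarrow> 'k rmod \<Rightarrow> 'k vec set \<Rightarrow> bool" where
  "subobj m c u G B A \<longleftrightarrow> submod m B A \<and> sub_in m c u G B A"

definition strict_subobj :: "nat \<Rightarrow> (nat \<Rightarrow> nat \<Rightarrow> nat \<Rightarrow> 'k::field) \<Rightarrow> (nat \<Rightarrow> 'k) \<Rightarrow>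
    'k rmod set \<Rightarrow> 'k rmod \<Rightarrow> 'k vec set \<Rightarrow> bool" where
  "strict_subobj m c u G B A \<longleftrightarrow> subobj m c u G B A \<and>
     (\<forall>B'. subobj m c u G B B' \<longrightarrow> sub_in m c u G B (A \<inter> B'))"

text \<open>V_Lambda = Hom_Z(K_0 Lambda, R): real functions on modules that are additive on
  short exact sequences (universal property of the Grothendieck group).\<close>
definition VLam :: "nat \<Rightarrow> (nat \<Rightarrow> nat \<Rightarrow> nat \<Rightarrow> 'k::field) \<Rightarrow> (nat \<Rightarrow> 'k) \<Rightarrow>
    ('k rmod \<Rightarrow> real) set" where
  "VLam m c u = {\<theta>. \<forall>L M N f g. ses m c u L M N f g \<longrightarrow> \<theta> M = \<theta> L + \<theta> N}"

definition pwall :: "nat \<Rightarrow> (nat \<Rightarrow> nat \<Rightarrow> nat \<Rightarrow> 'k::field) \<Rightarrow> (nat \<Rightarrow> 'k) \<Rightarrow>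
    'k rmod set \<Rightarrow> 'k rmod \<Rightarrow> ('k rmod \<Rightarrow> real) set" where
  "pwall m c u G M = {\<theta> \<in> VLam m c u. \<theta> M = 0 \<and>
     (\<forall>A N. strict_subobj m c u G M A \<and> is_sub_iso m c u M A N \<longrightarrow> \<theta> N \<le> 0)}"

definition WG :: "nat \<Rightarrow> (nat \<Rightarrow> nat \<Rightarrow> nat \<Rightarrow> 'k::field) \<Rightarrow> (nat \<Rightarrow> 'k) \<Rightarrow>
    'k rmod set \<Rightarrow> ('k rmod \<Rightarrow> real) set" where
  "WG m c u G = (\<Union>M\<in>{M\<in>G. mdim M \<noteq> 0}. pwall m c u G M)"

definition Pcl :: "nat \<Rightarrow> (nat \<Rightarrow> nat \<Rightarrow> nat \<Rightarrow> 'k::field) \<Rightarrow> (nat \<Rightarrow> 'k) \<Rightarrow>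
    'k rmod set \<Rightarrow> ('k rmod \<Rightarrow> real) \<Rightarrow> 'k rmod set" where
  "Pcl m c u G \<theta> = {M \<in> G. mdim M = 0 \<or>
     (\<forall>A N. strict_subobj m c u G M A \<and> is_quot_iso m c u M A N \<and> mdim N \<noteq> 0 \<longrightarrow> \<theta> N > 0)}"

text \<open>Via evaluation at
  the simple modules V_Lambda is identified with R^n; since every theta(M) is a fixed
  integer combination of the theta(S_i), the Euclidean topology is the initial topology
  of the evaluation maps theta \<mapsto> theta(M).\<close>
definition joinable_in :: "nat \<Rightarrow> (nat \<Rightarrow> nat \<Rightarrow> nat \<Rightarrow> 'k::field) \<Rightarrow> (nat \<Rightarrow> 'k) \<Rightarrow>
    ('k rmod \<Rightarrow> real) set \<Rightarrow> ('k rmod \<Rightarrow> real) \<Rightarrow> ('k rmod \<Rightarrow> real) \<Rightarrow> bool" where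
  "joinable_in m c u S \<theta>0 \<theta>1 \<longleftrightarrow>
     (\<exists>\<gamma> :: real \<Rightarrow> 'k rmod \<Rightarrow> real.
        \<gamma> 0 = \<theta>0 \<and> \<gamma> 1 = \<theta>1 \<and> (\<forall>t\<in>{0..1}. \<gamma> t \<in> S) \<and>
        (\<forall>M. is_rmod m c u M \<longrightarrow> continuous_on {0..1} (\<lambda>t. \<gamma> t M)))"

end

theory Submission
  imports Defs "Jordan_Normal_Form.Determinant"
begin

lemma dim0_vec: "v \<in> carrier_vec 0 \<Longrightarrow> v = 0\<^sub>v 0"
  using carrier_vecD vec_of_dim_0 by blast

lemma carrier_vec0: "carrier_vec 0 = {0\<^sub>v 0}"
  using dim0_vec zero_carrier_vec by blast

lemma smult_zero_vec': "a \<cdot>\<^sub>v 0\<^sub>v n = (0\<^sub>v n :: 'a::field vec)"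
  by (intro eq_vecI) auto

lemma mat_vec_zero': "A \<in> carrier_mat nr nc \<Longrightarrow> A *\<^sub>v 0\<^sub>v nc = (0\<^sub>v nr :: 'a::field vec)"
  by (intro eq_vecI) auto

lemma mat_n0_vec: "A \<in> carrier_mat n 0 \<Longrightarrow> v \<in> carrier_vec 0 \<Longrightarrow> A *\<^sub>v v = (0\<^sub>v n :: 'a::field vec)"
  using dim0_vec mat_vec_zero' by metis

lemma mat_n0_eq: "A \<in> carrier_mat n 0 \<Longrightarrow> B \<in> carrier_mat n 0 \<Longrightarrow> A = B"
  by (intro eq_matI) auto

lemma mat_0n_eq: "A \<in> carrier_mat 0 n \<Longrightarrow> B \<in> carrier_mat 0 n \<Longrightarrow> A = B"
  by (intro eq_matI) auto

lemma vec_minus_zero_eq: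
  assumes "v \<in> carrier_vec n" "w \<in> carrier_vec n" "v - w = (0\<^sub>v n :: 'a::field vec)"
  shows "v = w"
proof (rule eq_vecI)
  show "dim_vec v = dim_vec w" using assms by simp
next
  fix i assume i: "i < dim_vec w"
  then have "(v - w) $ i = 0" using assms by simp
  then show "v $ i = w $ i" using i by simp
qed

lemma mhom_carrier: "mhom m N X f \<Longrightarrow> f \<in> carrier_mat (mdim X) (mdim N)"
  by (simp add: mhom_def)

lemma mono_carrier: "mono_hom m N X f \<Longrightarrow> f \<in> carrier_mat (mdim X) (mdim N)"
  by (simp add: mono_hom_def mhom_def)

lemma rmod_act: "is_rmod m c u M \<Longrightarrow> i < m \<Longrightarrow> act M i \<in> carrier_mat (mdim M) (mdim M)"
  by (simp add: is_rmod_def)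

lemma mono_inj:
  assumes "mono_hom m N X f" "v \<in> carrier_vec (mdim N)" "w \<in> carrier_vec (mdim N)"
    "f *\<^sub>v v = f *\<^sub>v w"
  shows "v = w"
proof -
  have f: "f \<in> carrier_mat (mdim X) (mdim N)" using assms(1) by (rule mono_carrier)
  have "f *\<^sub>v (v - w) = f *\<^sub>v v - f *\<^sub>v w"
    using f assms(2,3) by (simp add: mult_minus_distrib_mat_vec)
  also have "\<dots> = 0\<^sub>v (mdim X)" using assms(4) f assms(3) by simp
  finally have "v - w \<in> mker N X f" using assms(2,3) by (simp add: mker_def)
  then have "v - w = 0\<^sub>v (mdim N)" using assms(1) by (simp add: mono_hom_def)
  then show ?thesis using assms(2,3) vec_minus_zero_eq by blast
qed

lemma mono_zero:
  assumes "mono_hom m N X f" "v \<in> carrier_vec (mdim N)" "f *\<^sub>v v = 0\<^sub>v (mdim X)"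
  shows "v = 0\<^sub>v (mdim N)"
  using assms unfolding mono_hom_def mker_def by auto

lemma mono_cancel:
  assumes "mono_hom m N X f" "A \<in> carrier_mat (mdim N) k" "B \<in> carrier_mat (mdim N) k"
    "f * A = f * B"
  shows "A = B"
proof (rule mat_col_eqI)
  have f: "f \<in> carrier_mat (mdim X) (mdim N)" using assms(1) by (rule mono_carrier)
  fix j assume "j < dim_col B"
  then have j: "j < k" using assms by simp
  have "f *\<^sub>v col A j = col (f * A) j" by (simp only: col_mult2[OF f assms(2) j])
  also have "\<dots> = col (f * B) j" using assms(4) by simp
  also have "\<dots> = f *\<^sub>v col B j" by (simp only: col_mult2[OF f assms(3) j])
  finally show "col A j = col B j"
    using mono_inj[OF assms(1)] assms(2,3) j by (meson col_carrier_vec)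
qed (use assms in auto)

definition zmod :: "'k::field rmod" where "zmod = (0, \<lambda>i. 0\<^sub>m 0 0)"

lemma zmod_dim[simp]: "mdim zmod = 0"
  by (simp add: zmod_def mdim_def)

lemma zmod_rmod: "is_rmod m c u zmod"
  by (simp add: is_rmod_def zmod_def mdim_def act_def)

lemma VLam_ses: "ses m c u L M N f g \<Longrightarrow> \<theta> \<in> VLam m c u \<Longrightarrow> \<theta> M = \<theta> L + \<theta> N"
  unfolding VLam_def mem_Collect_eq by blast

lemma zero_dim_theta:
  assumes th: "\<theta> \<in> VLam m c u" and N: "is_rmod m c u N" and d: "mdim N = 0"
  shows "\<theta> N = 0"
proof -
  let ?f = "1\<^sub>m 0 :: 'a mat"
  have mh: "mhom m N N ?f"
    unfolding mhom_def
  proof (intro conjI allI impI)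
    show "?f \<in> carrier_mat (mdim N) (mdim N)" using d by simp
    fix i assume "i < m"
    then have a: "act N i \<in> carrier_mat 0 0" using rmod_act[OF N] d by simp
    show "?f * act N i = act N i * ?f"
      by (rule mat_0n_eq[of _ 0]) (use a in auto)
  qed
  have ker: "mker N N ?f = carrier_vec 0" using d dim0_vec
    by (auto simp: mker_def)
  have img: "mimg N ?f = carrier_vec 0" using d dim0_vec
    by (auto simp: mimg_def carrier_vec0)
  have "ses m c u N N N ?f ?f"
    unfolding ses_def mono_hom_def epi_hom_def
    using N mh ker img d carrier_vec0 by simp
  then have "\<theta> N = \<theta> N + \<theta> N" using th by (rule VLam_ses)
  then show ?thesis by simp
qed


lemma iso_theta:
  fixes X :: "'k::field rmod"
  assumes th: "\<theta> \<in> VLam m c u" and N: "is_rmod m c u N" and X: "is_rmod m c u X"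
    and f: "mono_hom m N X f" and img: "mimg N f = carrier_vec (mdim X)"
  shows "\<theta> X = \<theta> N"
proof -
  let ?z = "0\<^sub>m (mdim N) 0 :: 'k mat"
  have zc: "?z \<in> carrier_mat (mdim N) 0" by simp
  have mh: "mhom m zmod N ?z"
    unfolding mhom_def
  proof (intro conjI allI impI)
    show "?z \<in> carrier_mat (mdim N) (mdim zmod)" by simp
    fix i assume i: "i < m"
    have a: "act zmod i \<in> carrier_mat 0 0" using rmod_act[OF zmod_rmod i] by simp
    have b: "act N i \<in> carrier_mat (mdim N) (mdim N)" using rmod_act[OF N i] .
    show "?z * act zmod i = act N i * ?z"
      by (rule mat_n0_eq[OF mult_carrier_mat[OF zero_carrier_mat a] mult_carrier_mat[OF b zero_carrier_mat]])
  qed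
  have ker: "mker zmod N ?z = {0\<^sub>v 0}"
    by (auto simp: mker_def carrier_vec0)
  have mz: "mono_hom m zmod N ?z" using mh ker by (simp add: mono_hom_def)
  have imgz: "mimg zmod ?z = {0\<^sub>v (mdim N)}"
    by (auto simp: mimg_def carrier_vec0)
  have kerf: "mker N X f = {0\<^sub>v (mdim N)}" using f by (simp add: mono_hom_def)
  have "ses m c u zmod N X ?z f"
    unfolding ses_def epi_hom_def
    using zmod_rmod N X mz f img imgz kerf by (simp add: mono_hom_def)
  from VLam_ses[OF this th] have "\<theta> N = \<theta> zmod + \<theta> X" .
  moreover have "\<theta> zmod = 0" using zero_dim_theta[OF th zmod_rmod] by simp
  ultimately show ?thesis by simp
qed

lemma ses_theta:
  assumes th: "\<theta> \<in> VLam m c u" and X: "is_rmod m c u X"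
    and s: "is_sub_iso m c u X A L" and q: "is_quot_iso m c u X A N"
  shows "\<theta> X = \<theta> L + \<theta> N"
proof -
  obtain f where f: "mono_hom m L X f" "mimg L f = A" using s by (auto simp: is_sub_iso_def)
  obtain g where g: "epi_hom m X N g" "mker X N g = A" using q by (auto simp: is_quot_iso_def)
  have "ses m c u L X N f g" unfolding ses_def
    using s q X f g by (simp add: is_sub_iso_def is_quot_iso_def)
  then show ?thesis using th by (rule VLam_ses)
qed

lemma tc_rmod: "torsion_class m c u G \<Longrightarrow> M \<in> G \<Longrightarrow> is_rmod m c u M"
  by (simp add: torsion_class_def)

lemma tc_epi: "torsion_class m c u G \<Longrightarrow> M \<in> G \<Longrightarrow> is_rmod m c u N \<Longrightarrow> epi_hom m M N g \<Longrightarrow> N \<in> G"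
  unfolding torsion_class_def by blast

lemma zmod_in_G:
  fixes X :: "'k::field rmod"
  assumes tc: "torsion_class m c u G" and XG: "X \<in> G"
  shows "zmod \<in> G"
proof -
  have X: "is_rmod m c u X" using tc XG by (rule tc_rmod)
  let ?g = "0\<^sub>m 0 (mdim X) :: 'k mat"
  have mh: "mhom m X zmod ?g"
    unfolding mhom_def
  proof (intro conjI allI impI)
    show "?g \<in> carrier_mat (mdim zmod) (mdim X)" by simp
    fix i assume i: "i < m"
    have a: "act zmod i \<in> carrier_mat 0 0" using rmod_act[OF zmod_rmod i] by simp
    have b: "act X i \<in> carrier_mat (mdim X) (mdim X)" using rmod_act[OF X i] .
    show "?g * act X i = act zmod i * ?g"
      by (rule mat_0n_eq[OF mult_carrier_mat[OF zero_carrier_mat b] mult_carrier_mat[OF a zero_carrier_mat]])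
  qed
  have img: "mimg X ?g = carrier_vec (mdim zmod)"
  proof
    show "mimg X ?g \<subseteq> carrier_vec (mdim zmod)"
      unfolding mimg_def using mult_mat_vec_carrier[OF zero_carrier_mat[of 0 "mdim X"]] by auto
    show "carrier_vec (mdim zmod) \<subseteq> mimg X ?g"
    proof
      fix v :: "'k vec" assume "v \<in> carrier_vec (mdim zmod)"
      then have "v = 0\<^sub>v 0" by (intro dim0_vec) simp
      also have "\<dots> = ?g *\<^sub>v 0\<^sub>v (mdim X)" by (rule dim0_vec[symmetric], rule mult_mat_vec_carrier[OF zero_carrier_mat], simp)
      finally have "v = ?g *\<^sub>v 0\<^sub>v (mdim X)" .
      then show "v \<in> mimg X ?g" unfolding mimg_def by (rule image_eqI) simp
    qed
  qed
  show ?thesis using tc_epi[OF tc XG zmod_rmod] mh img by (simp add: epi_hom_def)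
qed

lemma zero_mono:
  fixes X :: "'k::field rmod"
  assumes X: "is_rmod m c u X"
  shows "mono_hom m zmod X (0\<^sub>m (mdim X) 0)" and "mimg (zmod :: 'k rmod) (0\<^sub>m (mdim X) 0) = {0\<^sub>v (mdim X)}"
proof -
  let ?z = "0\<^sub>m (mdim X) 0 :: 'k mat"
  have mh: "mhom m zmod X ?z"
    unfolding mhom_def
  proof (intro conjI allI impI)
    show "?z \<in> carrier_mat (mdim X) (mdim zmod)" by simp
    fix i assume i: "i < m"
    have a: "act zmod i \<in> carrier_mat 0 0" using rmod_act[OF zmod_rmod i] by simp
    have b: "act X i \<in> carrier_mat (mdim X) (mdim X)" using rmod_act[OF X i] .
    show "?z * act zmod i = act X i * ?z"
      by (rule mat_n0_eq[OF mult_carrier_mat[OF zero_carrier_mat a] mult_carrier_mat[OF b zero_carrier_mat]])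
  qed
  have ker: "mker zmod X ?z = {0\<^sub>v 0}"
    by (auto simp: mker_def carrier_vec0)
  show "mono_hom m zmod X ?z" using mh ker by (simp add: mono_hom_def)
  have "?z *\<^sub>v 0\<^sub>v 0 = 0\<^sub>v (mdim X)" by (rule mat_n0_vec) auto
  then show "mimg (zmod :: 'k rmod) ?z = {0\<^sub>v (mdim X)}"
    unfolding mimg_def zmod_dim carrier_vec0 by simp
qed

lemma submod_carrier: "submod m M U \<Longrightarrow> U \<subseteq> carrier_vec (mdim M)"
  by (simp add: submod_def)

lemma submod_zero: "submod m M U \<Longrightarrow> 0\<^sub>v (mdim M) \<in> U"
  by (simp add: submod_def)

lemma zero_strict:
  fixes X :: "'k::field rmod"
  assumes tc: "torsion_class m c u G" and XG: "X \<in> G"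
  shows "strict_subobj m c u G X {0\<^sub>v (mdim X)}" and "is_sub_iso m c u X {0\<^sub>v (mdim X)} zmod"
proof -
  have X: "is_rmod m c u X" using tc XG by (rule tc_rmod)
  show si: "is_sub_iso m c u X {0\<^sub>v (mdim X)} zmod"
    unfolding is_sub_iso_def using zmod_rmod zero_mono[OF X] by blast
  have sin: "sub_in m c u G X {0\<^sub>v (mdim X)}"
    unfolding sub_in_def using si zmod_in_G[OF tc XG] by blast
  have sm: "submod m X {0\<^sub>v (mdim X)}"
    unfolding submod_def using rmod_act[OF X] by (auto simp: smult_zero_vec' mat_vec_zero')
  show "strict_subobj m c u G X {0\<^sub>v (mdim X)}"
    unfolding strict_subobj_def subobj_def
  proof (intro conjI allI impI sm sin)
    fix B' assume "submod m X B' \<and> sub_in m c u G X B'"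
    then have "{0\<^sub>v (mdim X)} \<inter> B' = {0\<^sub>v (mdim X)}" using submod_zero by blast
    then show "sub_in m c u G X ({0\<^sub>v (mdim X)} \<inter> B')" using sin by simp
  qed
qed

lemma id_mono:
  assumes X: "is_rmod m c u X"
  shows "mono_hom m X X (1\<^sub>m (mdim X))" "epi_hom m X X (1\<^sub>m (mdim X))"
    "mimg X (1\<^sub>m (mdim X)) = carrier_vec (mdim X)" "mker X X (1\<^sub>m (mdim X)) = {0\<^sub>v (mdim X)}"
proof -
  have mh: "mhom m X X (1\<^sub>m (mdim X))"
    unfolding mhom_def
  proof (intro conjI allI impI)
    show "1\<^sub>m (mdim X) \<in> carrier_mat (mdim X) (mdim X)" by simp
    fix i assume "i < m"
    then have a: "act X i \<in> carrier_mat (mdim X) (mdim X)" using rmod_act[OF X] by simp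
    show "1\<^sub>m (mdim X) * act X i = act X i * 1\<^sub>m (mdim X)" using carrier_matD[OF a] by simp
  qed
  show ker: "mker X X (1\<^sub>m (mdim X)) = {0\<^sub>v (mdim X)}"
    by (auto simp: mker_def)
  show img: "mimg X (1\<^sub>m (mdim X)) = carrier_vec (mdim X)"
    by (auto simp: mimg_def image_iff intro: bexI)
  show "mono_hom m X X (1\<^sub>m (mdim X))" using mh ker by (simp add: mono_hom_def)
  show "epi_hom m X X (1\<^sub>m (mdim X))" using mh img by (simp add: epi_hom_def)
qed

lemma submod_full: "is_rmod m c u X \<Longrightarrow> submod m X (carrier_vec (mdim X))"
  unfolding submod_def using rmod_act by fastforce

lemma full_strict:
  assumes tc: "torsion_class m c u G" and XG: "X \<in> G"
  shows "strict_subobj m c u G X (carrier_vec (mdim X))" and "is_sub_iso m c u X (carrier_vec (mdim X)) X"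
proof -
  have X: "is_rmod m c u X" using tc XG by (rule tc_rmod)
  show si: "is_sub_iso m c u X (carrier_vec (mdim X)) X"
    unfolding is_sub_iso_def using X id_mono[OF X] by blast
  have sin: "sub_in m c u G X (carrier_vec (mdim X))"
    unfolding sub_in_def using si XG by blast
  show "strict_subobj m c u G X (carrier_vec (mdim X))"
    unfolding strict_subobj_def subobj_def
  proof (intro conjI allI impI submod_full[OF X] sin)
    fix B' assume "submod m X B' \<and> sub_in m c u G X B'"
    moreover then have "carrier_vec (mdim X) \<inter> B' = B'" using submod_carrier by blast
    ultimately show "sub_in m c u G X (carrier_vec (mdim X) \<inter> B')" by simp
  qed
qed

lemma Pcl_pos:
  assumes tc: "torsion_class m c u G" and P: "X \<in> Pcl m c u G \<theta>" and d: "mdim X \<noteq> 0"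
  shows "\<theta> X > 0"
proof -
  have XG: "X \<in> G" using P by (simp add: Pcl_def)
  have X: "is_rmod m c u X" using tc XG by (rule tc_rmod)
  have q: "is_quot_iso m c u X {0\<^sub>v (mdim X)} X"
    unfolding is_quot_iso_def using X id_mono[OF X] by blast
  have "mdim X = 0 \<or> (\<forall>A N. strict_subobj m c u G X A \<and> is_quot_iso m c u X A N \<and> mdim N \<noteq> 0 \<longrightarrow> \<theta> N > 0)"
    using P unfolding Pcl_def mem_Collect_eq by blast
  then show ?thesis using d zero_strict(1)[OF tc XG] q by blast
qed

lemma quot_full_zero:
  fixes X N :: "'k::field rmod"
  assumes q: "is_quot_iso m c u X (carrier_vec (mdim X)) N"
  shows "mdim N = 0"
proof (rule ccontr)
  assume d: "mdim N \<noteq> 0"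
  obtain g where g: "epi_hom m X N g" "mker X N g = carrier_vec (mdim X)"
    using q by (auto simp: is_quot_iso_def)
  have "(unit_vec (mdim N) 0 :: 'k vec) \<in> mimg X g" using g(1) by (simp add: epi_hom_def)
  then obtain v where v: "v \<in> carrier_vec (mdim X)" "unit_vec (mdim N) 0 = g *\<^sub>v v"
    by (auto simp: mimg_def)
  have e: "g *\<^sub>v v = 0\<^sub>v (mdim N)" using v(1) g(2) by (auto simp: mker_def)
  have "(unit_vec (mdim N) 0 :: 'k vec) = 0\<^sub>v (mdim N)" using v(2) e by (rule trans)
  then have "(unit_vec (mdim N) 0 :: 'k vec) $ 0 = (0\<^sub>v (mdim N) :: 'k vec) $ 0" by simp
  then show False using d by simp
qed


lemma mhom_comp:
  fixes P N X :: "'k::field rmod"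
  assumes P: "is_rmod m c u P" and N: "is_rmod m c u N" and X: "is_rmod m c u X"
    and f: "mhom m N X f" and g: "mhom m P N g"
  shows "mhom m P X (f * g)"
proof -
  have fc: "f \<in> carrier_mat (mdim X) (mdim N)" using f by (rule mhom_carrier)
  have gc: "g \<in> carrier_mat (mdim N) (mdim P)" using g by (rule mhom_carrier)
  show ?thesis unfolding mhom_def
  proof (intro conjI allI impI)
    show "f * g \<in> carrier_mat (mdim X) (mdim P)" using fc gc by simp
    fix i assume i: "i < m"
    have aP: "act P i \<in> carrier_mat (mdim P) (mdim P)" using rmod_act[OF P i] .
    have aN: "act N i \<in> carrier_mat (mdim N) (mdim N)" using rmod_act[OF N i] .
    have aX: "act X i \<in> carrier_mat (mdim X) (mdim X)" using rmod_act[OF X i] .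
    have g1: "g * act P i = act N i * g" using g i by (simp add: mhom_def)
    have f1: "f * act N i = act X i * f" using f i by (simp add: mhom_def)
    have "(f * g) * act P i = f * (g * act P i)" using fc gc aP by simp
    also have "\<dots> = f * (act N i * g)" using g1 by simp
    also have "\<dots> = (f * act N i) * g" using fc aN gc by simp
    also have "\<dots> = (act X i * f) * g" using f1 by simp
    also have "\<dots> = act X i * (f * g)" using aX fc gc by simp
    finally show "(f * g) * act P i = act X i * (f * g)" .
  qed
qed

lemma mono_comp:
  fixes P N X :: "'k::field rmod"
  assumes P: "is_rmod m c u P" and N: "is_rmod m c u N" and X: "is_rmod m c u X"
    and f: "mono_hom m N X f" and g: "mono_hom m P N g"
  shows "mono_hom m P X (f * g)" and "mimg P (f * g) = (\<lambda>v. f *\<^sub>v v) ` mimg P g"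
proof -
  have fc: "f \<in> carrier_mat (mdim X) (mdim N)" using f by (rule mono_carrier)
  have gc: "g \<in> carrier_mat (mdim N) (mdim P)" using g by (rule mono_carrier)
  have eq: "\<And>v. v \<in> carrier_vec (mdim P) \<Longrightarrow> (f * g) *\<^sub>v v = f *\<^sub>v (g *\<^sub>v v)"
    using fc gc by simp
  have mh: "mhom m P X (f * g)"
    using mhom_comp[OF P N X] f g by (simp add: mono_hom_def)
  have ker: "mker P X (f * g) = {0\<^sub>v (mdim P)}"
  proof
    show "mker P X (f * g) \<subseteq> {0\<^sub>v (mdim P)}"
    proof
      fix v assume "v \<in> mker P X (f * g)"
      then have v: "v \<in> carrier_vec (mdim P)" "(f * g) *\<^sub>v v = 0\<^sub>v (mdim X)"
        by (auto simp: mker_def)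
      then have "f *\<^sub>v (g *\<^sub>v v) = 0\<^sub>v (mdim X)" using eq by simp
      then have "g *\<^sub>v v = 0\<^sub>v (mdim N)" using mono_zero[OF f] gc v(1) by simp
      then have "v = 0\<^sub>v (mdim P)" using mono_zero[OF g] v(1) by simp
      then show "v \<in> {0\<^sub>v (mdim P)}" by simp
    qed
    have "(f * g) *\<^sub>v 0\<^sub>v (mdim P) = 0\<^sub>v (mdim X)"
      by (rule mat_vec_zero') (use fc gc in simp)
    then show "{0\<^sub>v (mdim P)} \<subseteq> mker P X (f * g)" by (simp add: mker_def)
  qed
  show "mono_hom m P X (f * g)" using mh ker by (simp add: mono_hom_def)
  show "mimg P (f * g) = (\<lambda>v. f *\<^sub>v v) ` mimg P g"
    unfolding mimg_def image_image by (rule image_cong[OF refl eq])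
qed

lemma col_as_img:
  fixes p :: "'a::field mat"
  assumes pc: "p \<in> carrier_mat nr nc" and j: "j < nc"
  shows "col p j = p *\<^sub>v unit_vec nc j"
proof -
  have "p * 1\<^sub>m nc = p" by (rule right_mult_one_mat[OF pc])
  then have "col p j = col (p * 1\<^sub>m nc) j" by simp
  also have "\<dots> = p *\<^sub>v col (1\<^sub>m nc) j" by (rule col_mult2[OF pc one_carrier_mat j])
  also have "\<dots> = p *\<^sub>v unit_vec nc j" using j by simp
  finally show ?thesis .
qed

lemma factor:
  fixes P N X :: "'k::field rmod"
  assumes P: "is_rmod m c u P" and N: "is_rmod m c u N" and X: "is_rmod m c u X"
    and f: "mono_hom m N X f" and p: "mhom m P X p" and sub: "mimg P p \<subseteq> mimg N f"
  shows "\<exists>q. mhom m P N q \<and> f * q = p"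
proof -
  have fc: "f \<in> carrier_mat (mdim X) (mdim N)" using f by (rule mono_carrier)
  have pc: "p \<in> carrier_mat (mdim X) (mdim P)" using p by (rule mhom_carrier)
  define w where "w j = (SOME w. w \<in> carrier_vec (mdim N) \<and> f *\<^sub>v w = col p j)" for j
  have w: "w j \<in> carrier_vec (mdim N) \<and> f *\<^sub>v w j = col p j" if j: "j < mdim P" for j
  proof -
    have "col p j = p *\<^sub>v unit_vec (mdim P) j" by (rule col_as_img[OF pc j])
    then have "col p j \<in> mimg P p" unfolding mimg_def by (rule image_eqI) simp
    then have "col p j \<in> mimg N f" using sub by blast
    then obtain v where v: "v \<in> carrier_vec (mdim N)" "col p j = f *\<^sub>v v"
      unfolding mimg_def by blast
    then have "\<exists>w. w \<in> carrier_vec (mdim N) \<and> f *\<^sub>v w = col p j" by metis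
    then show ?thesis unfolding w_def by (rule someI_ex)
  qed
  define q where "q = mat (mdim N) (mdim P) (\<lambda>(i,j). w j $ i)"
  have qc: "q \<in> carrier_mat (mdim N) (mdim P)" by (simp add: q_def)
  have colq: "col q j = w j" if j: "j < mdim P" for j
  proof -
    have "col q j = vec (mdim N) (\<lambda>i. w j $ i)" using j by (simp add: q_def)
    also have "\<dots> = w j" using w[OF j] by (intro eq_vecI) auto
    finally show ?thesis .
  qed
  have fq: "f * q = p"
  proof (rule mat_col_eqI)
    fix j assume "j < dim_col p"
    then have j: "j < mdim P" using pc by simp
    have "col (f * q) j = f *\<^sub>v col q j" by (rule col_mult2[OF fc qc j])
    also have "\<dots> = col p j" using colq[OF j] w[OF j] by simp
    finally show "col (f * q) j = col p j" .
  qed (use fc pc qc in simp_all)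
  have "mhom m P N q"
    unfolding mhom_def
  proof (intro conjI allI impI qc)
    fix i assume i: "i < m"
    have aP: "act P i \<in> carrier_mat (mdim P) (mdim P)" using rmod_act[OF P i] .
    have aN: "act N i \<in> carrier_mat (mdim N) (mdim N)" using rmod_act[OF N i] .
    have aX: "act X i \<in> carrier_mat (mdim X) (mdim X)" using rmod_act[OF X i] .
    have p1: "p * act P i = act X i * p" using p i by (simp add: mhom_def)
    have f1: "f * act N i = act X i * f" using f i by (simp add: mhom_def mono_hom_def)
    have "f * (q * act P i) = (f * q) * act P i" using fc qc aP by simp
    also have "\<dots> = p * act P i" using fq by simp
    also have "\<dots> = act X i * (f * q)" using p1 fq by simp
    also have "\<dots> = (act X i * f) * q" using aX fc qc by simp
    also have "\<dots> = (f * act N i) * q" using f1 by simp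
    also have "\<dots> = f * (act N i * q)" using fc aN qc by simp
    finally have "f * (q * act P i) = f * (act N i * q)" .
    moreover have c1: "q * act P i \<in> carrier_mat (mdim N) (mdim P)" using qc aP by simp
    moreover have c2: "act N i * q \<in> carrier_mat (mdim N) (mdim P)" using aN qc by simp
    ultimately show "q * act P i = act N i * q"
      using mono_cancel[OF f] by blast
  qed
  then show ?thesis using fq by blast
qed

lemma factor_props:
  fixes P N X :: "'k::field rmod"
  assumes f: "mono_hom m N X f" and q: "mhom m P N q" and fq: "f * q = p"
    and p: "mono_hom m P X p"
  shows "mono_hom m P N q" and "mimg P q = {w \<in> carrier_vec (mdim N). f *\<^sub>v w \<in> mimg P p}"
proof -
  have fc: "f \<in> carrier_mat (mdim X) (mdim N)" using f by (rule mono_carrier)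
  have qc: "q \<in> carrier_mat (mdim N) (mdim P)" using q by (rule mhom_carrier)
  have eq: "\<And>v. v \<in> carrier_vec (mdim P) \<Longrightarrow> p *\<^sub>v v = f *\<^sub>v (q *\<^sub>v v)"
    using fc qc fq[symmetric] by simp
  have ker: "mker P N q = {0\<^sub>v (mdim P)}"
  proof
    show "mker P N q \<subseteq> {0\<^sub>v (mdim P)}"
    proof
      fix v assume "v \<in> mker P N q"
      then have v: "v \<in> carrier_vec (mdim P)" "q *\<^sub>v v = 0\<^sub>v (mdim N)"
        by (auto simp: mker_def)
      then have "p *\<^sub>v v = 0\<^sub>v (mdim X)" using eq fc mat_vec_zero'[OF fc] by simp
      then have "v = 0\<^sub>v (mdim P)" using mono_zero[OF p] v(1) by simp
      then show "v \<in> {0\<^sub>v (mdim P)}" by simp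
    qed
    have "q *\<^sub>v 0\<^sub>v (mdim P) = 0\<^sub>v (mdim N)" by (rule mat_vec_zero'[OF qc])
    then show "{0\<^sub>v (mdim P)} \<subseteq> mker P N q" by (simp add: mker_def)
  qed
  show "mono_hom m P N q" using q ker by (simp add: mono_hom_def)
  show "mimg P q = {w \<in> carrier_vec (mdim N). f *\<^sub>v w \<in> mimg P p}"
  proof
    show "mimg P q \<subseteq> {w \<in> carrier_vec (mdim N). f *\<^sub>v w \<in> mimg P p}"
    proof
      fix x assume "x \<in> mimg P q"
      then obtain v where v: "v \<in> carrier_vec (mdim P)" "x = q *\<^sub>v v" by (auto simp: mimg_def)
      have "f *\<^sub>v x = p *\<^sub>v v" using eq[OF v(1)] v(2) by simp
      then have "f *\<^sub>v x \<in> mimg P p" using v(1) unfolding mimg_def by simp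
      moreover have "x \<in> carrier_vec (mdim N)" using v qc by simp
      ultimately show "x \<in> {w \<in> carrier_vec (mdim N). f *\<^sub>v w \<in> mimg P p}" by simp
    qed
    show "{w \<in> carrier_vec (mdim N). f *\<^sub>v w \<in> mimg P p} \<subseteq> mimg P q"
    proof
      fix x assume "x \<in> {w \<in> carrier_vec (mdim N). f *\<^sub>v w \<in> mimg P p}"
      then have x: "x \<in> carrier_vec (mdim N)" "f *\<^sub>v x \<in> mimg P p" by auto
      then obtain v where v: "v \<in> carrier_vec (mdim P)" "f *\<^sub>v x = p *\<^sub>v v"
        by (auto simp: mimg_def)
      have "f *\<^sub>v x = f *\<^sub>v (q *\<^sub>v v)" using v eq by simp
      then have "x = q *\<^sub>v v" using mono_inj[OF f x(1)] v(1) qc by simp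
      then show "x \<in> mimg P q" unfolding mimg_def using v(1) by simp
    qed
  qed
qed

lemma sub_iso_in_G:
  fixes X N :: "'k::field rmod"
  assumes tc: "torsion_class m c u G" and X: "is_rmod m c u X"
    and s: "is_sub_iso m c u X A N" and si: "sub_in m c u G X A"
  shows "N \<in> G"
proof -
  obtain N' where N'G: "N' \<in> G" and s': "is_sub_iso m c u X A N'"
    using si by (auto simp: sub_in_def)
  have N': "is_rmod m c u N'" using tc N'G by (rule tc_rmod)
  have N: "is_rmod m c u N" using s by (simp add: is_sub_iso_def)
  obtain f where f: "mono_hom m N X f" "mimg N f = A" using s by (auto simp: is_sub_iso_def)
  obtain p where p: "mono_hom m N' X p" "mimg N' p = A" using s' by (auto simp: is_sub_iso_def)
  have "mhom m N' X p" using p(1) by (simp add: mono_hom_def)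
  then obtain q where q: "mhom m N' N q" "f * q = p"
    using factor[OF N' N X f(1)] p(2) f(2) by blast
  have img: "mimg N' q = {w \<in> carrier_vec (mdim N). f *\<^sub>v w \<in> mimg N' p}"
    by (rule factor_props(2)[OF f(1) q p(1)])
  have "mimg N' q = carrier_vec (mdim N)"
  proof -
    have "\<And>w. w \<in> carrier_vec (mdim N) \<Longrightarrow> f *\<^sub>v w \<in> mimg N' p"
      using f(2) p(2) unfolding mimg_def by blast
    then show ?thesis using img by blast
  qed
  then have "epi_hom m N' N q" using q(1) by (simp add: epi_hom_def)
  then show ?thesis using tc_epi[OF tc N'G N] by simp
qed


lemma submod_image:
  fixes N X :: "'k::field rmod"
  assumes N: "is_rmod m c u N" and X: "is_rmod m c u X"
    and f: "mhom m N X f" and A: "submod m N A'"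
  shows "submod m X ((\<lambda>v. f *\<^sub>v v) ` A')"
proof -
  have fc: "f \<in> carrier_mat (mdim X) (mdim N)" using f by (rule mhom_carrier)
  have Ac: "A' \<subseteq> carrier_vec (mdim N)" using A by (rule submod_carrier)
  have c1: "(\<lambda>v. f *\<^sub>v v) ` A' \<subseteq> carrier_vec (mdim X)" using Ac fc by auto
  have "f *\<^sub>v 0\<^sub>v (mdim N) = 0\<^sub>v (mdim X)" by (rule mat_vec_zero'[OF fc])
  then have c2: "0\<^sub>v (mdim X) \<in> (\<lambda>v. f *\<^sub>v v) ` A'"
    using submod_zero[OF A] by (metis image_eqI)
  have c3: "x + y \<in> (\<lambda>v. f *\<^sub>v v) ` A'" if xy: "x \<in> (\<lambda>v. f *\<^sub>v v) ` A'" "y \<in> (\<lambda>v. f *\<^sub>v v) ` A'" for x y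
  proof -
    obtain a b where ab: "a \<in> A'" "b \<in> A'" "x = f *\<^sub>v a" "y = f *\<^sub>v b" using xy by blast
    have "x + y = f *\<^sub>v (a + b)" using ab Ac fc by (simp add: mult_add_distrib_mat_vec subset_iff)
    moreover have "a + b \<in> A'" using A ab by (simp add: submod_def)
    ultimately show ?thesis by blast
  qed
  have c4: "a \<cdot>\<^sub>v x \<in> (\<lambda>v. f *\<^sub>v v) ` A'" if xy: "x \<in> (\<lambda>v. f *\<^sub>v v) ` A'" for a x
  proof -
    obtain b where ab: "b \<in> A'" "x = f *\<^sub>v b" using xy by blast
    have "a \<cdot>\<^sub>v x = f *\<^sub>v (a \<cdot>\<^sub>v b)" using ab Ac fc by (simp add: mult_mat_vec subset_iff)
    moreover have "a \<cdot>\<^sub>v b \<in> A'" using A ab by (simp add: submod_def)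
    ultimately show ?thesis by blast
  qed
  have c5: "act X i *\<^sub>v x \<in> (\<lambda>v. f *\<^sub>v v) ` A'" if i: "i < m" and xy: "x \<in> (\<lambda>v. f *\<^sub>v v) ` A'" for i x
  proof -
    obtain b where ab: "b \<in> A'" "x = f *\<^sub>v b" using xy by blast
    have bc: "b \<in> carrier_vec (mdim N)" using ab Ac by blast
    have aN: "act N i \<in> carrier_mat (mdim N) (mdim N)" using rmod_act[OF N i] .
    have aX: "act X i \<in> carrier_mat (mdim X) (mdim X)" using rmod_act[OF X i] .
    have f1: "f * act N i = act X i * f" using f i by (simp add: mhom_def)
    have "act X i *\<^sub>v x = (act X i * f) *\<^sub>v b" using ab aX fc bc by simp
    also have "\<dots> = (f * act N i) *\<^sub>v b" using f1 by simp
    also have "\<dots> = f *\<^sub>v (act N i *\<^sub>v b)" using fc aN bc by simp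
    finally have "act X i *\<^sub>v x = f *\<^sub>v (act N i *\<^sub>v b)" .
    moreover have "act N i *\<^sub>v b \<in> A'" using A ab i by (simp add: submod_def)
    ultimately show ?thesis by blast
  qed
  show ?thesis unfolding submod_def using c1 c2 c3 c4 c5 by blast
qed

lemma submod_preimage:
  fixes N X :: "'k::field rmod"
  assumes N: "is_rmod m c u N" and X: "is_rmod m c u X"
    and f: "mhom m N X f" and B: "submod m X B"
  shows "submod m N {v \<in> carrier_vec (mdim N). f *\<^sub>v v \<in> B}"
proof -
  have fc: "f \<in> carrier_mat (mdim X) (mdim N)" using f by (rule mhom_carrier)
  have "f *\<^sub>v 0\<^sub>v (mdim N) = 0\<^sub>v (mdim X)" by (rule mat_vec_zero'[OF fc])
  then have c2: "f *\<^sub>v 0\<^sub>v (mdim N) \<in> B" using submod_zero[OF B] by simp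
  have c3: "f *\<^sub>v (x + y) \<in> B" if "x \<in> carrier_vec (mdim N)" "y \<in> carrier_vec (mdim N)"
    "f *\<^sub>v x \<in> B" "f *\<^sub>v y \<in> B" for x y
  proof -
    have "f *\<^sub>v (x + y) = f *\<^sub>v x + f *\<^sub>v y" using that fc by (simp add: mult_add_distrib_mat_vec)
    then show ?thesis using B that by (simp add: submod_def)
  qed
  have c4: "f *\<^sub>v (a \<cdot>\<^sub>v x) \<in> B" if "x \<in> carrier_vec (mdim N)" "f *\<^sub>v x \<in> B" for a x
  proof -
    have "f *\<^sub>v (a \<cdot>\<^sub>v x) = a \<cdot>\<^sub>v (f *\<^sub>v x)" using that fc by (simp add: mult_mat_vec)
    then show ?thesis using B that by (simp add: submod_def)
  qed
  have c5: "f *\<^sub>v (act N i *\<^sub>v x) \<in> B" if i: "i < m" and "x \<in> carrier_vec (mdim N)" "f *\<^sub>v x \<in> B" for i x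
  proof -
    have aN: "act N i \<in> carrier_mat (mdim N) (mdim N)" using rmod_act[OF N i] .
    have aX: "act X i \<in> carrier_mat (mdim X) (mdim X)" using rmod_act[OF X i] .
    have f1: "f * act N i = act X i * f" using f i by (simp add: mhom_def)
    have "f *\<^sub>v (act N i *\<^sub>v x) = (f * act N i) *\<^sub>v x" using fc aN that by simp
    also have "\<dots> = (act X i * f) *\<^sub>v x" using f1 by simp
    also have "\<dots> = act X i *\<^sub>v (f *\<^sub>v x)" using aX fc that by simp
    finally show ?thesis using B that by (simp add: submod_def)
  qed
  have c6: "act N i *\<^sub>v x \<in> carrier_vec (mdim N)" if i: "i < m" and "x \<in> carrier_vec (mdim N)" for i x
    using rmod_act[OF N i] that by simp
  show ?thesis unfolding submod_def using c2 c3 c4 c5 c6 by auto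
qed

lemma sub_iso_comp:
  fixes N X N'' :: "'k::field rmod"
  assumes N: "is_rmod m c u N" and X: "is_rmod m c u X"
    and f: "mono_hom m N X f" and s: "is_sub_iso m c u N A' N''"
  shows "is_sub_iso m c u X ((\<lambda>v. f *\<^sub>v v) ` A') N''"
proof -
  have N'': "is_rmod m c u N''" using s by (simp add: is_sub_iso_def)
  obtain r where r: "mono_hom m N'' N r" "mimg N'' r = A'" using s by (auto simp: is_sub_iso_def)
  have "mono_hom m N'' X (f * r)" "mimg N'' (f * r) = (\<lambda>v. f *\<^sub>v v) ` A'"
    using mono_comp[OF N'' N X f r(1)] r(2) by auto
  then show ?thesis unfolding is_sub_iso_def using N'' by blast
qed

lemma strict_transport:
  fixes N X :: "'k::field rmod"
  assumes tc: "torsion_class m c u G" and X: "is_rmod m c u X" and NG: "N \<in> G"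
    and f: "mono_hom m N X f" and fA: "mimg N f = A"
    and sA: "strict_subobj m c u G X A" and sA': "strict_subobj m c u G N A'"
  shows "strict_subobj m c u G X ((\<lambda>v. f *\<^sub>v v) ` A')"
proof -
  have N: "is_rmod m c u N" using tc NG by (rule tc_rmod)
  have fc: "f \<in> carrier_mat (mdim X) (mdim N)" using f by (rule mono_carrier)
  have fh: "mhom m N X f" using f by (simp add: mono_hom_def)
  have A'sub: "submod m N A'" and A'in: "sub_in m c u G N A'"
    and A'str: "\<And>B'. subobj m c u G N B' \<Longrightarrow> sub_in m c u G N (A' \<inter> B')"
    using sA' by (auto simp: strict_subobj_def subobj_def)
  have Astr: "\<And>B'. subobj m c u G X B' \<Longrightarrow> sub_in m c u G X (A \<inter> B')"
    using sA by (auto simp: strict_subobj_def)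
  have Ac: "A' \<subseteq> carrier_vec (mdim N)" using A'sub by (rule submod_carrier)
  have sm: "submod m X ((\<lambda>v. f *\<^sub>v v) ` A')" by (rule submod_image[OF N X fh A'sub])
  have si: "sub_in m c u G X ((\<lambda>v. f *\<^sub>v v) ` A')"
  proof -
    obtain N'' where "N'' \<in> G" "is_sub_iso m c u N A' N''" using A'in by (auto simp: sub_in_def)
    then show ?thesis unfolding sub_in_def using sub_iso_comp[OF N X f] by blast
  qed
  have st: "sub_in m c u G X ((\<lambda>v. f *\<^sub>v v) ` A' \<inter> B')" if B': "subobj m c u G X B'" for B'
  proof -
    define B'' where "B'' = {v \<in> carrier_vec (mdim N). f *\<^sub>v v \<in> B'}"
    have B'sub: "submod m X B'" using B' by (simp add: subobj_def)
    have smB'': "submod m N B''" unfolding B''_def by (rule submod_preimage[OF N X fh B'sub])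
    obtain P where PG: "P \<in> G" and Ps: "is_sub_iso m c u X (A \<inter> B') P"
      using Astr[OF B'] by (auto simp: sub_in_def)
    have P: "is_rmod m c u P" using tc PG by (rule tc_rmod)
    obtain p where p: "mono_hom m P X p" "mimg P p = A \<inter> B'" using Ps by (auto simp: is_sub_iso_def)
    have ph: "mhom m P X p" using p(1) by (simp add: mono_hom_def)
    obtain q where q: "mhom m P N q" "f * q = p"
      using factor[OF P N X f ph] p(2) fA by blast
    have qm: "mono_hom m P N q" by (rule factor_props(1)[OF f q p(1)])
    have qi: "mimg P q = {w \<in> carrier_vec (mdim N). f *\<^sub>v w \<in> mimg P p}"
      by (rule factor_props(2)[OF f q p(1)])
    have "mimg P q = B''"
    proof -
      have "\<And>w. w \<in> carrier_vec (mdim N) \<Longrightarrow> f *\<^sub>v w \<in> A"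
        using fA unfolding mimg_def by blast
      then show ?thesis using qi p(2) unfolding B''_def by blast
    qed
    then have "is_sub_iso m c u N B'' P" unfolding is_sub_iso_def using P qm by blast
    then have "sub_in m c u G N B''" unfolding sub_in_def using PG by blast
    then have "subobj m c u G N B''" using smB'' by (simp add: subobj_def)
    from A'str[OF this] obtain Q where QG: "Q \<in> G" and Qs: "is_sub_iso m c u N (A' \<inter> B'') Q"
      unfolding sub_in_def by blast
    have "is_sub_iso m c u X ((\<lambda>v. f *\<^sub>v v) ` (A' \<inter> B'')) Q"
      by (rule sub_iso_comp[OF N X f Qs])
    moreover have "(\<lambda>v. f *\<^sub>v v) ` (A' \<inter> B'') = (\<lambda>v. f *\<^sub>v v) ` A' \<inter> B'"
      using Ac unfolding B''_def by blast
    ultimately show ?thesis unfolding sub_in_def using QG by auto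
  qed
  show ?thesis unfolding strict_subobj_def subobj_def using sm si st by (simp add: subobj_def)
qed


lemma mono_dim:
  fixes N X :: "'k::field rmod"
  assumes f: "mono_hom m N X f" and ni: "mimg N f \<noteq> carrier_vec (mdim X)"
  shows "mdim N < mdim X"
proof (rule ccontr)
  assume "\<not> mdim N < mdim X"
  then have le: "mdim X \<le> mdim N" by simp
  have fc: "f \<in> carrier_mat (mdim X) (mdim N)" using f by (rule mono_carrier)
  have sub: "mimg N f \<subseteq> carrier_vec (mdim X)" using fc unfolding mimg_def by auto
  show False
  proof (cases "mdim X = mdim N")
    case True
    have fc': "f \<in> carrier_mat (mdim N) (mdim N)" using fc True by simp
    have "det f \<noteq> 0"
    proof
      assume "det f = 0"
      then obtain v where v: "v \<in> carrier_vec (mdim N)" "v \<noteq> 0\<^sub>v (mdim N)" "f *\<^sub>v v = 0\<^sub>v (mdim N)"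
        using det_0_iff_vec_prod_zero_field[OF fc'] by blast
      have "f *\<^sub>v v = 0\<^sub>v (mdim X)" using v(3) True by simp
      then have "v = 0\<^sub>v (mdim N)" by (rule mono_zero[OF f v(1)])
      with v(2) show False by simp
    qed
    from det_non_zero_imp_unit[OF fc' this, of "()"]
    have "f \<in> Units (ring_mat TYPE('k) (mdim N) ())" .
    then obtain B where B: "B \<in> carrier_mat (mdim N) (mdim N)" "f * B = 1\<^sub>m (mdim N)"
      unfolding Units_def ring_mat_def by auto
    have "carrier_vec (mdim X) \<subseteq> mimg N f"
    proof
      fix y :: "'k vec" assume y: "y \<in> carrier_vec (mdim X)"
      then have "y = (f * B) *\<^sub>v y" using B True by simp
      also have "\<dots> = f *\<^sub>v (B *\<^sub>v y)" by (rule assoc_mult_mat_vec[OF fc' B(1)]) (use y True in simp)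
      finally show "y \<in> mimg N f" unfolding mimg_def by (rule image_eqI) (use B y True in simp)
    qed
    then show False using ni sub by blast
  next
    case False
    then have lt: "mdim X < mdim N" using le by simp
    define F where "F = mat (mdim N) (mdim N) (\<lambda>(i,j). if i < mdim X then f $$ (i,j) else 0)"
    have Fc: "F \<in> carrier_mat (mdim N) (mdim N)" by (simp add: F_def)
    have FF: "F = mat\<^sub>r (mdim N) (mdim N) (\<lambda>i. if i = mdim N - 1 then 0\<^sub>v (mdim N) else row F i)"
      by (rule eq_matI) (use lt in \<open>auto simp: F_def\<close>)
    have "det (mat\<^sub>r (mdim N) (mdim N) (\<lambda>i. if i = mdim N - 1 then 0\<^sub>v (mdim N) else row F i)) = 0"
      by (rule det_row_0) (use lt Fc in \<open>auto intro: carrier_vecI\<close>)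
    then have "det F = 0" using FF by simp
    then obtain v where v: "v \<in> carrier_vec (mdim N)" "v \<noteq> 0\<^sub>v (mdim N)" "F *\<^sub>v v = 0\<^sub>v (mdim N)"
      using det_0_iff_vec_prod_zero_field[OF Fc] by blast
    have "f *\<^sub>v v = 0\<^sub>v (mdim X)"
    proof (rule eq_vecI)
      fix i assume "i < dim_vec (0\<^sub>v (mdim X) :: 'k vec)"
      then have i: "i < mdim X" by simp
      have r: "row f i = row F i" using i lt fc by (intro eq_vecI) (auto simp: F_def)
      have "(f *\<^sub>v v) $ i = row f i \<bullet> v" using fc i by simp
      also have "\<dots> = row F i \<bullet> v" using r by simp
      also have "\<dots> = (F *\<^sub>v v) $ i" using Fc i lt by simp
      also have "\<dots> = 0" using v(3) i lt by simp
      finally show "(f *\<^sub>v v) $ i = 0\<^sub>v (mdim X) $ i" using i by simp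
    qed (use fc in simp)
    then have "v = 0\<^sub>v (mdim N)" by (rule mono_zero[OF f v(1)])
    with v(2) show False by simp
  qed
qed


lemma star:
  fixes X :: "'k::field rmod"
  assumes tc: "torsion_class m c u G" and th: "\<theta> \<in> VLam m c u" and nw: "\<theta> \<notin> WG m c u G"
  shows "X \<in> G \<Longrightarrow> mdim X \<noteq> 0 \<Longrightarrow>
    (\<exists>A N. strict_subobj m c u G X A \<and> is_sub_iso m c u X A N \<and> mdim N \<noteq> 0 \<and> N \<in> Pcl m c u G \<theta>) \<or>
    (\<forall>A N. strict_subobj m c u G X A \<and> is_sub_iso m c u X A N \<and> mdim N \<noteq> 0 \<longrightarrow> \<theta> N < 0)"
proof (induction "mdim X" arbitrary: X rule: less_induct)
  case (less X)
  have XG: "X \<in> G" and dX: "mdim X \<noteq> 0" using less.prems by auto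
  have Xr: "is_rmod m c u X" using tc XG by (rule tc_rmod)
  show ?case
  proof (cases "\<exists>A N. strict_subobj m c u G X A \<and> is_sub_iso m c u X A N \<and> mdim N \<noteq> 0 \<and> N \<in> Pcl m c u G \<theta>")
    case True
    then show ?thesis by (rule disjI1)
  next
    case False
    note H = False
    have proper: "\<theta> N < 0" if sA: "strict_subobj m c u G X A" and sN: "is_sub_iso m c u X A N"
      and dN: "mdim N \<noteq> 0" and pr: "A \<noteq> carrier_vec (mdim X)" for A N
    proof -
      obtain f where f: "mono_hom m N X f" "mimg N f = A" using sN by (auto simp: is_sub_iso_def)
      have Nr: "is_rmod m c u N" using sN by (simp add: is_sub_iso_def)
      have lt: "mdim N < mdim X" by (rule mono_dim[OF f(1)]) (use f(2) pr in simp)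
      have sinA: "sub_in m c u G X A" using sA by (simp add: strict_subobj_def subobj_def)
      have NG: "N \<in> G" by (rule sub_iso_in_G[OF tc Xr sN sinA])
      have HN: "\<not> (\<exists>A' N'. strict_subobj m c u G N A' \<and> is_sub_iso m c u N A' N' \<and> mdim N' \<noteq> 0 \<and> N' \<in> Pcl m c u G \<theta>)"
      proof
        assume "\<exists>A' N'. strict_subobj m c u G N A' \<and> is_sub_iso m c u N A' N' \<and> mdim N' \<noteq> 0 \<and> N' \<in> Pcl m c u G \<theta>"
        then obtain A' N' where a: "strict_subobj m c u G N A'" "is_sub_iso m c u N A' N'"
          "mdim N' \<noteq> 0" "N' \<in> Pcl m c u G \<theta>" by blast
        have "strict_subobj m c u G X ((\<lambda>v. f *\<^sub>v v) ` A')"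
          by (rule strict_transport[OF tc Xr NG f(1) f(2) sA a(1)])
        moreover have "is_sub_iso m c u X ((\<lambda>v. f *\<^sub>v v) ` A') N'"
          by (rule sub_iso_comp[OF Nr Xr f(1) a(2)])
        ultimately show False using H a(3,4) by blast
      qed
      have "(\<exists>A' N'. strict_subobj m c u G N A' \<and> is_sub_iso m c u N A' N' \<and> mdim N' \<noteq> 0 \<and> N' \<in> Pcl m c u G \<theta>) \<or>
        (\<forall>A' N'. strict_subobj m c u G N A' \<and> is_sub_iso m c u N A' N' \<and> mdim N' \<noteq> 0 \<longrightarrow> \<theta> N' < 0)"
        by (rule less.hyps[OF lt NG dN])
      then have all: "\<forall>A' N'. strict_subobj m c u G N A' \<and> is_sub_iso m c u N A' N' \<and> mdim N' \<noteq> 0 \<longrightarrow> \<theta> N' < 0"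
        using HN by blast
      then show "\<theta> N < 0" using full_strict[OF tc NG] dN by blast
    qed
    have fullcase: "\<theta> N = \<theta> X" if sN: "is_sub_iso m c u X (carrier_vec (mdim X)) N" for N
    proof -
      obtain f where f: "mono_hom m N X f" "mimg N f = carrier_vec (mdim X)" using sN by (auto simp: is_sub_iso_def)
      have Nr: "is_rmod m c u N" using sN by (simp add: is_sub_iso_def)
      show ?thesis using iso_theta[OF th Nr Xr f] by simp
    qed
    have ne: "\<theta> X \<noteq> 0"
    proof
      assume z: "\<theta> X = 0"
      have le: "\<theta> N \<le> 0" if a: "strict_subobj m c u G X A \<and> is_sub_iso m c u X A N" for A N
      proof -
        have Nr: "is_rmod m c u N" using a by (simp add: is_sub_iso_def)
        show ?thesis
        proof (cases "mdim N = 0")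
          case True
          then show ?thesis using zero_dim_theta[OF th Nr] by simp
        next
          case False
          show ?thesis
          proof (cases "A = carrier_vec (mdim X)")
            case True
            then show ?thesis using fullcase a z by simp
          next
            case False
            have "\<theta> N < 0" by (rule proper) (use a \<open>mdim N \<noteq> 0\<close> False in auto)
            then show ?thesis by simp
          qed
        qed
      qed
      have "\<theta> \<in> pwall m c u G X" unfolding pwall_def using th z le by blast
      moreover have "\<theta> \<notin> pwall m c u G X" using nw XG dX unfolding WG_def by blast
      ultimately show False by blast
    qed
    have neg: "\<theta> X < 0"
    proof (rule ccontr)
      assume "\<not> \<theta> X < 0"
      then have pos: "\<theta> X > 0" using ne by simp
      have "X \<notin> Pcl m c u G \<theta>" using H full_strict[OF tc XG] dX by blast
      then obtain A N where sA: "strict_subobj m c u G X A" and q: "is_quot_iso m c u X A N"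
        and dN: "mdim N \<noteq> 0" and le: "\<not> \<theta> N > 0"
        using XG dX unfolding Pcl_def mem_Collect_eq by blast
      obtain L where LG: "L \<in> G" and sL: "is_sub_iso m c u X A L"
        using sA unfolding strict_subobj_def subobj_def sub_in_def by blast
      have Lr: "is_rmod m c u L" using sL by (simp add: is_sub_iso_def)
      have sum: "\<theta> X = \<theta> L + \<theta> N" by (rule ses_theta[OF th Xr sL q])
      show False
      proof (cases "mdim L = 0")
        case True
        then show False using zero_dim_theta[OF th Lr] sum pos le by simp
      next
        case False
        show False
        proof (cases "A = carrier_vec (mdim X)")
          case True
          then have "mdim N = 0" using quot_full_zero q by simp
          then show False using dN by simp
        next
          case nf: False
          have "\<theta> L < 0" by (rule proper[OF sA sL False nf])
          then show False using sum pos le by simp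
        qed
      qed
    qed
    have "\<forall>A N. strict_subobj m c u G X A \<and> is_sub_iso m c u X A N \<and> mdim N \<noteq> 0 \<longrightarrow> \<theta> N < 0"
    proof (intro allI impI)
      fix A N assume a: "strict_subobj m c u G X A \<and> is_sub_iso m c u X A N \<and> mdim N \<noteq> 0"
      show "\<theta> N < 0"
      proof (cases "A = carrier_vec (mdim X)")
        case True
        then show ?thesis using fullcase a neg by simp
      next
        case False
        then show ?thesis using proper a by blast
      qed
    qed
    then show ?thesis by (rule disjI2)
  qed
qed

lemma conv_pos:
  fixes t a b :: real
  assumes "0 \<le> t" "t \<le> 1" "0 < a" "0 < b"
  shows "0 < (1 - t) * a + t * b"
proof (cases "t = 0")
  case True then show ?thesis using assms by simp
next
  case False
  then have "0 < t * b" using assms by simp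
  moreover have "0 \<le> (1 - t) * a" using assms by simp
  ultimately show ?thesis by simp
qed

theorem mainTheorem15:
  fixes m :: nat and c :: "nat \<Rightarrow> nat \<Rightarrow> nat \<Rightarrow> 'k::field" and u :: "nat \<Rightarrow> 'k"
    and G :: "'k rmod set" and \<theta>0 \<theta>1 :: "'k rmod \<Rightarrow> real"
  assumes "fd_algebra m c u"
    and "torsion_class m c u G"
    and "\<theta>0 \<in> VLam m c u - WG m c u G"
    and "\<theta>1 \<in> VLam m c u - WG m c u G"
    and "\<not> joinable_in m c u (VLam m c u - WG m c u G) \<theta>0 \<theta>1"
  shows "Pcl m c u G \<theta>0 \<noteq> Pcl m c u G \<theta>1"
proof
  assume eqP: "Pcl m c u G \<theta>0 = Pcl m c u G \<theta>1"
  have tc: "torsion_class m c u G" by fact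
  have th0: "\<theta>0 \<in> VLam m c u" and nw0: "\<theta>0 \<notin> WG m c u G" using assms(3) by auto
  have th1: "\<theta>1 \<in> VLam m c u" and nw1: "\<theta>1 \<notin> WG m c u G" using assms(4) by auto
  define \<gamma> where "\<gamma> = (\<lambda>(t::real) (M::'k rmod). (1 - t) * \<theta>0 M + t * \<theta>1 M)"
  have "joinable_in m c u (VLam m c u - WG m c u G) \<theta>0 \<theta>1"
    unfolding joinable_in_def
  proof (intro exI conjI ballI allI impI)
    show "\<gamma> 0 = \<theta>0" by (simp add: \<gamma>_def)
    show "\<gamma> 1 = \<theta>1" by (simp add: \<gamma>_def)
    fix M :: "'k rmod"
    show "continuous_on {0..1} (\<lambda>t. \<gamma> t M)"
      unfolding \<gamma>_def by (intro continuous_intros)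
  next
    fix t :: real assume t: "t \<in> {0..1}"
    have t0: "0 \<le> t" and t1: "t \<le> 1" using t by auto
    have vl: "\<gamma> t \<in> VLam m c u"
      unfolding VLam_def mem_Collect_eq
    proof (intro allI impI)
      fix L M N f g assume s: "ses m c u L M N f g"
      have "\<theta>0 M = \<theta>0 L + \<theta>0 N" by (rule VLam_ses[OF s th0])
      moreover have "\<theta>1 M = \<theta>1 L + \<theta>1 N" by (rule VLam_ses[OF s th1])
      ultimately show "\<gamma> t M = \<gamma> t L + \<gamma> t N" unfolding \<gamma>_def by (simp add: algebra_simps)
    qed
    have nwt: "\<gamma> t \<notin> WG m c u G"
    proof
      assume "\<gamma> t \<in> WG m c u G"
      then obtain X where XG: "X \<in> G" and dX: "mdim X \<noteq> 0" and pw: "\<gamma> t \<in> pwall m c u G X"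
        unfolding WG_def by blast
      have z: "\<gamma> t X = 0" using pw by (simp add: pwall_def)
      have le: "\<And>A N. strict_subobj m c u G X A \<Longrightarrow> is_sub_iso m c u X A N \<Longrightarrow> \<gamma> t N \<le> 0"
        using pw unfolding pwall_def by blast
      have noP: False if ex: "\<exists>A N. strict_subobj m c u G X A \<and> is_sub_iso m c u X A N \<and> mdim N \<noteq> 0 \<and> N \<in> Pcl m c u G \<theta>0"
      proof -
        obtain A N where a: "strict_subobj m c u G X A" "is_sub_iso m c u X A N" "mdim N \<noteq> 0"
          "N \<in> Pcl m c u G \<theta>0" using ex by blast
        have p0: "\<theta>0 N > 0" by (rule Pcl_pos[OF tc a(4) a(3)])
        have p1: "\<theta>1 N > 0" using Pcl_pos[OF tc _ a(3)] a(4) eqP by simp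
        have "\<gamma> t N > 0" unfolding \<gamma>_def by (rule conv_pos[OF t0 t1 p0 p1])
        then show False using le[OF a(1,2)] by simp
      qed
      have n0: "\<theta>0 X < 0"
      proof -
        have "\<forall>A N. strict_subobj m c u G X A \<and> is_sub_iso m c u X A N \<and> mdim N \<noteq> 0 \<longrightarrow> \<theta>0 N < 0"
          using star[OF tc th0 nw0 XG dX] noP by blast
        then show ?thesis using full_strict[OF tc XG] dX by blast
      qed
      have n1: "\<theta>1 X < 0"
      proof -
        have "\<forall>A N. strict_subobj m c u G X A \<and> is_sub_iso m c u X A N \<and> mdim N \<noteq> 0 \<longrightarrow> \<theta>1 N < 0"
          using star[OF tc th1 nw1 XG dX] noP eqP by metis
        then show ?thesis using full_strict[OF tc XG] dX by blast
      qed
      have "0 < (1 - t) * (- \<theta>0 X) + t * (- \<theta>1 X)"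
        by (rule conv_pos[OF t0 t1]) (use n0 n1 in simp_all)
      then have "\<gamma> t X < 0" unfolding \<gamma>_def by (simp add: algebra_simps)
      then show False using z by simp
    qed
    show "\<gamma> t \<in> VLam m c u - WG m c u G" using vl nwt by simp
  qed
  then show False using assms(5) by simp
qed

end
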